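(* Under the setting of the cluster-growth decomposition (with $v_m$ following the canonical grain extension relative to $\mathbf a$, and $F=F_*\sqcup F_\circ\subset E_d(\square_m)$): (1) if $F_\circ\neq\emptyset$, then $(D_Fv_m)(x)=0$ for all $x\in\mathscr C_{bc}^{\mathbf a^F}(\square_m)$; (2) for $x\in\square_m\setminus\mathscr C_{bc}^{\mathbf a^F}(\square_m)$, if $F_\circ$ is not contained in the set of edges having both endpoints in $\mathcal O^{\mathbf a^{F_\circ}}(x)$, then $(D_Fv_m)(x)=0$.
   Context: Bond configurations on $\mathbb Z^d$, $\ell^\infty$ distance $\mathrm{dist}$, $\square_m=\mathbb Z^d\cap(-3^m/2,3^m/2)^d$, $E_d(\square_m)$ its edges, $\partial\square_m=\{x\in\square_m:\exists y\sim x,y\notin\square_m\}$. For a configuration $\mathbf b$: $\mathscr C_{bc}^{\mathbf b}(\square_m)$ is the set of $x\in\square_m$ joined to $\partial\square_m$ by a $\mathbf b$-open path inside $\square_m$; $\mathcal O^{\mathbf b}(x)$ the set of vertices joined to $x$ by a $\mathbf b$-open path inside $\square_m$. $\mathbf a^G(e)=\mathbf 1_{e\in G}+\mathbf a(e)\mathbf 1_{e\notin G}$. Canonical grain relative to $\mathbf a$: $[x]^G=x$ if $x\in\mathscr C_{bc}^{\mathbf a^G}(\square_m)$, else $[x]^G=\arg\min_{y\in\mathscr C_{bc}^{\mathbf a}(\square_m)}\mathrm{dist}(y,\mathcal O^{\mathbf a^G}(x))$ (lexicographic tie-break). Fix $\xi$; $h^{\mathbf b}$ is the unique function on $\mathscr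 C_{bc}^{\mathbf b}(\square_m)$ equal to $\xi\cdot x$ on $\partial\square_m$ and $\mathbf b$-harmonic at its other points; $v_m^G(x):=h^{\mathbf a^G}([x]^G)$ and $(D_Fv_m)(x)=\sum_{G\subset F}(-1)^{|F\setminus G|}v_m^G(x)$. $F_*=\{e\in F:$ both endpoints of $e$ in $\mathscr C_{bc}^{\mathbf a^F}(\square_m)\}$, $F_\circ=F\setminus F_*$. *)

theory Defs
  imports Complex_Main
begin

text \<open>Points of Z^d are functions nat => int vanishing at coordinates >= d.\<close>
type_synonym pt = "nat \<Rightarrow> int"
type_synonym edge = "pt set"
type_synonym config = "edge \<Rightarrow> bool"

definition Zd :: "nat \<Rightarrow> pt set" where
  "Zd d = {x. \<forall>i\<ge>d. x i = 0}"

definition adj :: "nat \<Rightarrow> pt \<Rightarrow> pt \<Rightarrow> bool" where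
  "adj d x y \<longleftrightarrow> x \<in> Zd d \<and> y \<in> Zd d \<and> (\<Sum>i<d. \<bar>x i - y i\<bar>) = 1"

definition linf :: "nat \<Rightarrow> pt \<Rightarrow> pt \<Rightarrow> int" where
  "linf d x y = Max (insert 0 ((\<lambda>i. \<bar>x i - y i\<bar>) ` {..<d}))"

definition setdist :: "nat \<Rightarrow> pt \<Rightarrow> pt set \<Rightarrow> int" where
  "setdist d y S = Min ((\<lambda>s. linf d y s) ` S)"

definition lex_less :: "nat \<Rightarrow> pt \<Rightarrow> pt \<Rightarrow> bool" where
  "lex_less d x y \<longleftrightarrow> (\<exists>k<d. (\<forall>i<k. x i = y i) \<and> x k < y k)"

definition box :: "nat \<Rightarrow> nat \<Rightarrow> pt set" where
  "box d m = {x \<in> Zd d. \<forall>i<d. \<bar>real_of_int (x i)\<bar> < 3 ^ m / 2}"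

definition bdry :: "nat \<Rightarrow> nat \<Rightarrow> pt set" where
  "bdry d m = {x \<in> box d m. \<exists>y. adj d x y \<and> y \<notin> box d m}"

definition edges :: "nat \<Rightarrow> nat \<Rightarrow> edge set" where
  "edges d m = {{x, y} | x y. x \<in> box d m \<and> y \<in> box d m \<and> adj d x y}"

definition ostep :: "nat \<Rightarrow> nat \<Rightarrow> config \<Rightarrow> pt \<Rightarrow> pt \<Rightarrow> bool" where
  "ostep d m b x y \<longleftrightarrow> x \<in> box d m \<and> y \<in> box d m \<and> adj d x y \<and> b {x, y}"

definition Ocl :: "nat \<Rightarrow> nat \<Rightarrow> config \<Rightarrow> pt \<Rightarrow> pt set" where
  "Ocl d m b x = {y. (ostep d m b)\<^sup>*\<^sup>* x y}"

definition Cbc :: "nat \<Rightarrow> nat \<Rightarrow> config \<Rightarrow> pt set" where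
  "Cbc d m b = {x \<in> box d m. \<exists>y \<in> bdry d m. (ostep d m b)\<^sup>*\<^sup>* x y}"

definition cfg_upd :: "config \<Rightarrow> edge set \<Rightarrow> config" where
  "cfg_upd a G = (\<lambda>e. e \<in> G \<or> a e)"

definition affine :: "nat \<Rightarrow> (nat \<Rightarrow> real) \<Rightarrow> pt \<Rightarrow> real" where
  "affine d \<xi> x = (\<Sum>i<d. \<xi> i * real_of_int (x i))"

definition harm :: "nat \<Rightarrow> nat \<Rightarrow> (nat \<Rightarrow> real) \<Rightarrow> config \<Rightarrow> pt \<Rightarrow> real" where
  "harm d m \<xi> b = (THE h.
      (\<forall>x \<in> bdry d m. h x = affine d \<xi> x) \<and>
      (\<forall>x \<in> Cbc d m b - bdry d m.
          (\<Sum>y \<in> {y \<in> box d m. ostep d m b x y}. h y - h x) = 0) \<and>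
      (\<forall>x. x \<notin> Cbc d m b \<longrightarrow> h x = 0))"

definition grain :: "nat \<Rightarrow> nat \<Rightarrow> config \<Rightarrow> edge set \<Rightarrow> pt \<Rightarrow> pt" where
  "grain d m a G x =
     (if x \<in> Cbc d m (cfg_upd a G) then x
      else (let M = {y \<in> Cbc d m a.
                       \<forall>z \<in> Cbc d m a. setdist d y (Ocl d m (cfg_upd a G) x)
                                       \<le> setdist d z (Ocl d m (cfg_upd a G) x)}
            in THE y. y \<in> M \<and> (\<forall>z \<in> M. z \<noteq> y \<longrightarrow> lex_less d y z)))"

definition vm :: "nat \<Rightarrow> nat \<Rightarrow> (nat \<Rightarrow> real) \<Rightarrow> config \<Rightarrow> edge set \<Rightarrow> pt \<Rightarrow> real" where
  "vm d m \<xi> a G x = harm d m \<xi> (cfg_upd a G) (grain d m a G x)"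

definition DF :: "nat \<Rightarrow> nat \<Rightarrow> (nat \<Rightarrow> real) \<Rightarrow> config \<Rightarrow> edge set \<Rightarrow> pt \<Rightarrow> real" where
  "DF d m \<xi> a F x = (\<Sum>G \<in> Pow F. (-1) ^ card (F - G) * vm d m \<xi> a G x)"

definition Fstar :: "nat \<Rightarrow> nat \<Rightarrow> config \<Rightarrow> edge set \<Rightarrow> edge set" where
  "Fstar d m a F = {e \<in> F. e \<subseteq> Cbc d m (cfg_upd a F)}"

definition Fcirc :: "nat \<Rightarrow> nat \<Rightarrow> config \<Rightarrow> edge set \<Rightarrow> edge set" where
  "Fcirc d m a F = F - Fstar d m a F"

end

theory Submission
  imports Defs
begin

lemma ostep_sym: "ostep d m b x y \<Longrightarrow> ostep d m b y x"
  unfolding ostep_def adj_def by (auto simp: insert_commute abs_minus_commute)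

lemma rt_sym: "(ostep d m b)\<^sup>*\<^sup>* x y \<Longrightarrow> (ostep d m b)\<^sup>*\<^sup>* y x"
  by (induction rule: rtranclp_induct) (auto intro: converse_rtranclp_into_rtranclp ostep_sym)

lemma box_closed: "(ostep d m b)\<^sup>*\<^sup>* x w \<Longrightarrow> x \<in> box d m \<Longrightarrow> w \<in> box d m"
  by (induction rule: rtranclp_induct) (auto simp: ostep_def)

lemma lemA: assumes "R'\<^sup>*\<^sup>* x y" "\<And>u v. R' u v \<Longrightarrow> R'\<^sup>*\<^sup>* v y \<Longrightarrow> R u v" shows "R\<^sup>*\<^sup>* x y"
  using assms(1) by (induction rule: converse_rtranclp_induct) (auto intro: converse_rtranclp_into_rtranclp assms(2))

lemma lemB: assumes "R'\<^sup>*\<^sup>* x y" "\<And>u v. R'\<^sup>*\<^sup>* x u \<Longrightarrow> R' u v \<Longrightarrow> R u v" shows "R\<^sup>*\<^sup>* x y"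
  using assms(1) by (induction rule: rtranclp_induct) (auto intro: rtranclp.rtrancl_into_rtrancl assms(2))

lemma ostep_mono: "G \<subseteq> H \<Longrightarrow> ostep d m (cfg_upd a G) u v \<Longrightarrow> ostep d m (cfg_upd a H) u v"
  by (auto simp: ostep_def cfg_upd_def)

lemma cfg_mono: "G \<subseteq> H \<Longrightarrow> (ostep d m (cfg_upd a G))\<^sup>*\<^sup>* x y \<Longrightarrow> (ostep d m (cfg_upd a H))\<^sup>*\<^sup>* x y"
  by (rule lemB[of "ostep d m (cfg_upd a G)"]) (auto intro: ostep_mono)

lemma ostep_ins: "ostep d m (cfg_upd a (insert e G)) u v \<Longrightarrow> {u,v} \<noteq> e \<Longrightarrow> ostep d m (cfg_upd a G) u v"
  by (auto simp: ostep_def cfg_upd_def)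

lemma ostep_ins2: "ostep d m (cfg_upd a G) u v \<Longrightarrow> ostep d m (cfg_upd a (insert e G)) u v"
  by (auto simp: ostep_def cfg_upd_def)

lemma Cbc_eq:
  assumes "\<forall>w\<in>e. w \<notin> Cbc d m (cfg_upd a (insert e G))"
  shows "Cbc d m (cfg_upd a G) = Cbc d m (cfg_upd a (insert e G))"
proof
  show "Cbc d m (cfg_upd a G) \<subseteq> Cbc d m (cfg_upd a (insert e G))"
    unfolding Cbc_def using cfg_mono[of G "insert e G" d m a] by blast
next
  show "Cbc d m (cfg_upd a (insert e G)) \<subseteq> Cbc d m (cfg_upd a G)"
  proof
    fix x assume "x \<in> Cbc d m (cfg_upd a (insert e G))"
    then obtain y where y: "y \<in> bdry d m" "(ostep d m (cfg_upd a (insert e G)))\<^sup>*\<^sup>* x y" "x \<in> box d m"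
      by (auto simp: Cbc_def)
    have "(ostep d m (cfg_upd a G))\<^sup>*\<^sup>* x y"
    proof (rule lemA[OF y(2)])
      fix u v assume uv: "ostep d m (cfg_upd a (insert e G)) u v"
        "(ostep d m (cfg_upd a (insert e G)))\<^sup>*\<^sup>* v y"
      then have "(ostep d m (cfg_upd a (insert e G)))\<^sup>*\<^sup>* u y"
        by (rule converse_rtranclp_into_rtranclp)
      then have "u \<in> Cbc d m (cfg_upd a (insert e G))"
        using y(1) uv(1) by (auto simp: Cbc_def ostep_def)
      with assms have "{u,v} \<noteq> e" by auto
      with uv(1) show "ostep d m (cfg_upd a G) u v" by (rule ostep_ins)
    qed
    with y show "x \<in> Cbc d m (cfg_upd a G)" by (auto simp: Cbc_def)
  qed
qed

lemma harm_eq: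
  assumes "\<forall>w\<in>e. w \<notin> Cbc d m (cfg_upd a (insert e G))"
  shows "harm d m \<xi> (cfg_upd a G) = harm d m \<xi> (cfg_upd a (insert e G))"
proof -
  have sets: "{y \<in> box d m. ostep d m (cfg_upd a G) x y} = {y \<in> box d m. ostep d m (cfg_upd a (insert e G)) x y}"
    if "x \<in> Cbc d m (cfg_upd a (insert e G))" for x
  proof -
    have ne: "{x,y} \<noteq> e" for y using that assms by auto
    have "ostep d m (cfg_upd a G) x y = ostep d m (cfg_upd a (insert e G)) x y" for y
    proof
      assume "ostep d m (cfg_upd a G) x y"
      then show "ostep d m (cfg_upd a (insert e G)) x y" by (rule ostep_ins2)
    next
      assume "ostep d m (cfg_upd a (insert e G)) x y"
      then show "ostep d m (cfg_upd a G) x y" using ne[of y] by (rule ostep_ins)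
    qed
    then show ?thesis by simp
  qed
  have P: "(\<forall>x\<in>Cbc d m (cfg_upd a (insert e G)) - bdry d m.
              (\<Sum>y\<in>{y \<in> box d m. ostep d m (cfg_upd a G) x y}. h y - h x) = 0)
         = (\<forall>x\<in>Cbc d m (cfg_upd a (insert e G)) - bdry d m.
              (\<Sum>y\<in>{y \<in> box d m. ostep d m (cfg_upd a (insert e G)) x y}. h y - h x) = 0)"
    for h
  proof (rule ball_cong[OF refl])
    fix x assume "x \<in> Cbc d m (cfg_upd a (insert e G)) - bdry d m"
    then have "x \<in> Cbc d m (cfg_upd a (insert e G))" by simp
    show "((\<Sum>y\<in>{y \<in> box d m. ostep d m (cfg_upd a G) x y}. h y - h x) = 0)
        = ((\<Sum>y\<in>{y \<in> box d m. ostep d m (cfg_upd a (insert e G)) x y}. h y - h x) = 0)"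
      unfolding sets[OF \<open>x \<in> Cbc d m (cfg_upd a (insert e G))\<close>] by (rule refl)
  qed
  show ?thesis
    unfolding harm_def Cbc_eq[OF assms] P by (rule refl)
qed

lemma Ocl_eq:
  assumes "Ocl d m (cfg_upd a (insert e G)) x \<inter> e = {}"
  shows "Ocl d m (cfg_upd a G) x = Ocl d m (cfg_upd a (insert e G)) x"
proof
  show "Ocl d m (cfg_upd a G) x \<subseteq> Ocl d m (cfg_upd a (insert e G)) x"
    unfolding Ocl_def using cfg_mono[of G "insert e G" d m a] by blast
next
  show "Ocl d m (cfg_upd a (insert e G)) x \<subseteq> Ocl d m (cfg_upd a G) x"
  proof
    fix y assume "y \<in> Ocl d m (cfg_upd a (insert e G)) x"
    then have y: "(ostep d m (cfg_upd a (insert e G)))\<^sup>*\<^sup>* x y" by (simp add: Ocl_def)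
    have "(ostep d m (cfg_upd a G))\<^sup>*\<^sup>* x y"
    proof (rule lemB[OF y])
      fix u v assume uv: "(ostep d m (cfg_upd a (insert e G)))\<^sup>*\<^sup>* x u"
        "ostep d m (cfg_upd a (insert e G)) u v"
      then have "u \<in> Ocl d m (cfg_upd a (insert e G)) x" by (simp add: Ocl_def)
      with assms have "{u,v} \<noteq> e" by auto
      with uv(2) show "ostep d m (cfg_upd a G) u v" by (rule ostep_ins)
    qed
    then show "y \<in> Ocl d m (cfg_upd a G) x" by (simp add: Ocl_def)
  qed
qed

lemma vm_eq:
  assumes "\<forall>w\<in>e. w \<notin> Cbc d m (cfg_upd a (insert e G))"
    and "x \<notin> Cbc d m (cfg_upd a (insert e G)) \<Longrightarrow> Ocl d m (cfg_upd a (insert e G)) x \<inter> e = {}"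
  shows "vm d m \<xi> a G x = vm d m \<xi> a (insert e G) x"
proof -
  have "grain d m a G x = grain d m a (insert e G) x"
  proof (cases "x \<in> Cbc d m (cfg_upd a (insert e G))")
    case True
    then have "x \<in> Cbc d m (cfg_upd a G)" using Cbc_eq[OF assms(1)] by simp
    then show ?thesis unfolding grain_def using True by (simp only: if_True)
  next
    case False
    show ?thesis unfolding grain_def Cbc_eq[OF assms(1)] Ocl_eq[OF assms(2)[OF False]]
      by (rule refl)
  qed
  then show ?thesis unfolding vm_def harm_eq[OF assms(1)] by (rule arg_cong)
qed

lemma alt_sum:
  fixes f :: "edge set \<Rightarrow> real"
  assumes "e \<in> F" "\<And>G. G \<subseteq> F - {e} \<Longrightarrow> f (insert e G) = f G"
  shows "(\<Sum>G\<in>Pow F. (-1::real) ^ card (F - G) * f G) = 0"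
proof (cases "finite F")
  case False then show ?thesis by simp
next
  case fin: True
  define A where "A = F - {e}"
  have F: "F = insert e A" using assms(1) unfolding A_def by blast
  have eA: "e \<notin> A" unfolding A_def by blast
  have finA: "finite A" using fin unfolding A_def by blast
  have disj: "Pow A \<inter> insert e ` Pow A = {}" using eA by blast
  have inj: "inj_on (insert e) (Pow A)"
    unfolding inj_on_def using eA by (metis Pow_iff subsetD insert_ident)
  have cardeq: "card (F - G) = Suc (card (F - insert e G))" if "G \<subseteq> A" for G
  proof -
    have 1: "F - G = insert e (F - insert e G)" using that eA F by blast
    have 2: "e \<notin> F - insert e G" by blast
    have 3: "finite (F - insert e G)" using fin by blast
    show ?thesis unfolding 1 by (rule card_insert_disjoint[OF 3 2])
  qed
  let ?g = "\<lambda>G. (-1::real) ^ card (F - G) * f G"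
  have PF: "Pow F = Pow A \<union> insert e ` Pow A" unfolding F by (rule Pow_insert)
  have finPA: "finite (Pow A)" using finA by simp
  have "sum ?g (Pow F) = sum ?g (Pow A) + sum ?g (insert e ` Pow A)"
    unfolding PF by (rule sum.union_disjoint[OF finPA finite_imageI[OF finPA] disj])
  also have "sum ?g (insert e ` Pow A) = sum (?g \<circ> insert e) (Pow A)"
    by (rule sum.reindex[OF inj])
  also have "\<dots> = (\<Sum>G\<in>Pow A. - ?g G)"
  proof (rule sum.cong[OF refl])
    fix G assume "G \<in> Pow A"
    then have G: "G \<subseteq> A" by simp
    have "f (insert e G) = f G" using assms(2) G unfolding A_def by blast
    then show "(?g \<circ> insert e) G = - ?g G" using cardeq[OF G] by simp
  qed
  finally show ?thesis by (simp add: sum_negf)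
qed


lemma Cbc_reach:
  assumes "(ostep d m b)\<^sup>*\<^sup>* u v" "u \<in> box d m" "v \<in> Cbc d m b"
  shows "u \<in> Cbc d m b"
  using assms unfolding Cbc_def by (auto intro: rtranclp_trans)

lemma Cbc_mono: "G \<subseteq> H \<Longrightarrow> Cbc d m (cfg_upd a G) \<subseteq> Cbc d m (cfg_upd a H)"
  unfolding Cbc_def using cfg_mono[of G H d m a] by blast

lemma edge_not_Cbc:
  assumes "e \<in> Fcirc d m a F" "F \<subseteq> edges d m"
  shows "\<forall>w\<in>e. w \<notin> Cbc d m (cfg_upd a F)"
proof -
  have eF: "e \<in> F" and nsub: "\<not> e \<subseteq> Cbc d m (cfg_upd a F)"
    using assms(1) unfolding Fcirc_def Fstar_def by auto
  then obtain p q where pq: "e = {p,q}" "p \<in> box d m" "q \<in> box d m" "adj d p q"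
    using assms(2) unfolding edges_def by blast
  have st: "ostep d m (cfg_upd a F) p q" using pq eF unfolding ostep_def cfg_upd_def by simp
  have 1: "q \<in> Cbc d m (cfg_upd a F)" if "p \<in> Cbc d m (cfg_upd a F)"
    using Cbc_reach[OF r_into_rtranclp[where r="ostep d m (cfg_upd a F)", OF ostep_sym[OF st]] pq(3) that] .
  have 2: "p \<in> Cbc d m (cfg_upd a F)" if "q \<in> Cbc d m (cfg_upd a F)"
    using Cbc_reach[OF r_into_rtranclp[where r="ostep d m (cfg_upd a F)", OF st] pq(2) that] .
  show ?thesis using 1 2 nsub pq(1) by blast
qed

lemma DF_zero:
  assumes "e \<in> F" "\<forall>w\<in>e. w \<notin> Cbc d m (cfg_upd a F)"
    and "\<And>G. G \<subseteq> F \<Longrightarrow> x \<notin> Cbc d m (cfg_upd a G) \<Longrightarrow> Ocl d m (cfg_upd a G) x \<inter> e = {}"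
  shows "DF d m \<xi> a F x = 0"
  unfolding DF_def
proof (rule alt_sum[OF assms(1)])
  fix G assume G: "G \<subseteq> F - {e}"
  then have GF: "insert e G \<subseteq> F" using assms(1) by blast
  have c1: "\<forall>w\<in>e. w \<notin> Cbc d m (cfg_upd a (insert e G))"
    using assms(2) Cbc_mono[OF GF, of d m a] by blast
  show "vm d m \<xi> a (insert e G) x = vm d m \<xi> a G x"
    by (rule vm_eq[OF c1 assms(3)[OF GF], symmetric])
qed

theorem corollary6p3:
  fixes d m :: nat and \<xi> :: "nat \<Rightarrow> real" and a :: config and F :: "edge set"
  assumes "d \<ge> 1" and "F \<subseteq> edges d m"
  shows "(Fcirc d m a F \<noteq> {} \<longrightarrow>
            (\<forall>x \<in> Cbc d m (cfg_upd a F). DF d m \<xi> a F x = 0))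
       \<and> (\<forall>x \<in> box d m - Cbc d m (cfg_upd a F).
            \<not> (Fcirc d m a F \<subseteq>
                 {e \<in> edges d m. e \<subseteq> Ocl d m (cfg_upd a (Fcirc d m a F)) x})
            \<longrightarrow> DF d m \<xi> a F x = 0)"
proof (intro conjI impI ballI)
  fix x assume ne: "Fcirc d m a F \<noteq> {}" and x: "x \<in> Cbc d m (cfg_upd a F)"
  then obtain e where e: "e \<in> Fcirc d m a F" by blast
  have eF: "e \<in> F" using e unfolding Fcirc_def by blast
  have E1: "\<forall>w\<in>e. w \<notin> Cbc d m (cfg_upd a F)" by (rule edge_not_Cbc[OF e assms(2)])
  have xbox: "x \<in> box d m" using x unfolding Cbc_def by blast
  show "DF d m \<xi> a F x = 0"
  proof (rule DF_zero[OF eF E1])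
    fix G assume G: "G \<subseteq> F"
    show "Ocl d m (cfg_upd a G) x \<inter> e = {}"
    proof (rule ccontr)
      assume "Ocl d m (cfg_upd a G) x \<inter> e \<noteq> {}"
      then obtain w where w: "w \<in> e" "(ostep d m (cfg_upd a G))\<^sup>*\<^sup>* x w"
        unfolding Ocl_def by blast
      have xw: "(ostep d m (cfg_upd a F))\<^sup>*\<^sup>* x w" by (rule cfg_mono[OF G w(2)])
      have "w \<in> Cbc d m (cfg_upd a F)"
        using Cbc_reach[OF rt_sym[OF xw] box_closed[OF xw xbox] x] .
      then show False using E1 w(1) by blast
    qed
  qed
next
  fix x assume x: "x \<in> box d m - Cbc d m (cfg_upd a F)"
    and nsub: "\<not> Fcirc d m a F \<subseteq> {e \<in> edges d m. e \<subseteq> Ocl d m (cfg_upd a (Fcirc d m a F)) x}"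
  define Fc where "Fc = Fcirc d m a F"
  obtain e where e: "e \<in> Fc" and ne: "\<not> (e \<in> edges d m \<and> e \<subseteq> Ocl d m (cfg_upd a Fc) x)"
    using nsub unfolding Fc_def by blast
  have eF: "e \<in> F" using e unfolding Fc_def Fcirc_def by blast
  have E1: "\<forall>w\<in>e. w \<notin> Cbc d m (cfg_upd a F)"
    using edge_not_Cbc[OF _ assms(2)] e unfolding Fc_def by blast
  have ee: "e \<in> edges d m" using eF assms(2) by blast
  then obtain p q where pq: "e = {p,q}" "p \<in> box d m" "q \<in> box d m" "adj d p q"
    unfolding edges_def by blast
  have st: "ostep d m (cfg_upd a Fc) p q" using pq e unfolding ostep_def cfg_upd_def by simp
  have nO: "\<not> e \<subseteq> Ocl d m (cfg_upd a Fc) x" using ne ee by blast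
  have 1: "q \<in> Ocl d m (cfg_upd a Fc) x" if "p \<in> Ocl d m (cfg_upd a Fc) x"
    using that st unfolding Ocl_def by (auto intro: rtranclp.rtrancl_into_rtrancl)
  have 2: "p \<in> Ocl d m (cfg_upd a Fc) x" if "q \<in> Ocl d m (cfg_upd a Fc) x"
    using that ostep_sym[OF st] unfolding Ocl_def by (auto intro: rtranclp.rtrancl_into_rtrancl)
  have E2: "\<forall>w\<in>e. w \<notin> Ocl d m (cfg_upd a Fc) x" using 1 2 nO pq(1) by blast
  have xbox: "x \<in> box d m" and xnC: "x \<notin> Cbc d m (cfg_upd a F)" using x by auto
  have incl: "(ostep d m (cfg_upd a Fc))\<^sup>*\<^sup>* x w" if "(ostep d m (cfg_upd a F))\<^sup>*\<^sup>* x w" for w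
  proof (rule lemB[OF that])
    fix u v assume xu: "(ostep d m (cfg_upd a F))\<^sup>*\<^sup>* x u" and uv: "ostep d m (cfg_upd a F) u v"
    have "u \<notin> Cbc d m (cfg_upd a F)"
      using Cbc_reach[OF xu xbox] xnC by blast
    then have "{u,v} \<notin> Fstar d m a F" unfolding Fstar_def by blast
    then show "ostep d m (cfg_upd a Fc) u v"
      using uv unfolding ostep_def cfg_upd_def Fc_def Fcirc_def by blast
  qed
  show "DF d m \<xi> a F x = 0"
  proof (rule DF_zero[OF eF E1])
    fix G assume G: "G \<subseteq> F"
    show "Ocl d m (cfg_upd a G) x \<inter> e = {}"
    proof (rule ccontr)
      assume "Ocl d m (cfg_upd a G) x \<inter> e \<noteq> {}"
      then obtain w where w: "w \<in> e" "(ostep d m (cfg_upd a G))\<^sup>*\<^sup>* x w"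
        unfolding Ocl_def by blast
      have "(ostep d m (cfg_upd a Fc))\<^sup>*\<^sup>* x w" by (rule incl[OF cfg_mono[OF G w(2)]])
      then show False using E2 w(1) unfolding Ocl_def by blast
    qed
  qed
qed

end
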